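(* Let $P:\mathbb{R}^n\to\mathbb{R}$ be a nonzero nonnegative polynomial of degree at most $2$, i.e. $P(\mathbf x)=\mathbf x^\top Q\mathbf x+2\mathbf a^\top\mathbf x+b\ge0$ for all $\mathbf x\in\mathbb{R}^n$, with $Q$ real symmetric, $\mathbf a\in\mathbb{R}^n$, $b\in\mathbb{R}$. Let $X_1,\dots,X_n$ be independent real Gaussian random variables (each normal with positive variance) and $\mathbf X=(X_1,\dots,X_n)^\top$. Then $$\mathbb{E}\log P(\mathbf X)\le\log\mathbb{E}P(\mathbf X)\le\mathbb{E}\log P(\mathbf X)+C_1,$$ where $C_1=-\frac{1}{\sqrt{2\pi}}\int_{\mathbb{R}}\log(x^2)e^{-x^2/2}\,dx=1.270362845\ldots$. *)

theory Defs
  imports "HOL-Probability.Probability"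
begin

definition quad_poly :: "real^'n^'n \<Rightarrow> real^'n \<Rightarrow> real \<Rightarrow> real^'n \<Rightarrow> real" where
  "quad_poly Q a b x = x \<bullet> (Q *v x) + 2 * (a \<bullet> x) + b"

definition C1 :: real where
  "C1 = - (1 / sqrt (2 * pi)) * (LBINT x. ln (x\<^sup>2) * exp (- (x\<^sup>2) / 2))"

end

theory Submission
  imports Defs
begin

lemma exp_nn_int:
  fixes u :: real assumes u: "0 < u"
  shows "(\<integral>\<^sup>+t. ennreal (exp (-(t*u))) * indicator {0<..} t \<partial>lborel) = ennreal (1/u)"
proof -
  have "(\<integral>\<^sup>+t. ennreal (exp (-(t*u))) * indicator {0<..} t \<partial>lborel)
      = (\<integral>\<^sup>+t. ennreal (exp (-(t*u))) * indicator {0..} t \<partial>lborel)"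
    by (rule nn_integral_cong_AE) (use AE_lborel_singleton[of 0] in \<open>auto split: split_indicator\<close>)
  also have "\<dots> = ennreal (0 - (- exp (-(0*u)) / u))"
  proof (rule nn_integral_FTC_atLeast)
    show "(\<lambda>t. exp (-(t*u))) \<in> borel_measurable borel" by measurable
    fix x :: real
    show "((\<lambda>t. - exp (-(t*u)) / u) has_real_derivative exp (-(x*u))) (at x)"
      using u by (auto intro!: derivative_eq_intros)
    show "0 \<le> exp (-(x*u))" by simp
  next
    show "((\<lambda>t. - exp (-(t*u)) / u) \<longlongrightarrow> 0) at_top"
      using u by real_asymp
  qed
  finally show ?thesis by simp
qed

lemma frullani_nn:
  fixes A B :: real assumes A: "0 < A" and AB: "A \<le> B"
  shows "(\<integral>\<^sup>+t. ennreal ((exp (-(t*A)) - exp (-(t*B))) / t) * indicator {0<..} t \<partial>lborel)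
    = ennreal (ln B - ln A)"
proof -
  have eq1: "ennreal ((exp (-(t*A)) - exp (-(t*B))) / t)
      = (\<integral>\<^sup>+u. ennreal (exp (-(t*u))) * indicator {A..B} u \<partial>lborel)" if t: "0 < t" for t
  proof -
    have "(\<integral>\<^sup>+u. ennreal (exp (-(t*u))) * indicator {A..B} u \<partial>lborel)
       = ennreal ((- exp (-(t*B)) / t) - (- exp (-(t*A)) / t))"
    proof (rule nn_integral_FTC_Icc)
      show "(\<lambda>u. exp (-(t*u))) \<in> borel_measurable borel" by measurable
      fix x :: real
      show "((\<lambda>u. - exp (-(t*u)) / t) has_real_derivative exp (-(t*x))) (at x)"
        using t by (auto intro!: derivative_eq_intros)
      show "0 \<le> exp (-(t*x))" by simp
    qed (use AB in auto)
    then show ?thesis by (simp add: diff_divide_distrib)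
  qed
  have "(\<integral>\<^sup>+t. ennreal ((exp (-(t*A)) - exp (-(t*B))) / t) * indicator {0<..} t \<partial>lborel)
     = (\<integral>\<^sup>+t. (\<integral>\<^sup>+u. ennreal (exp (-(t*u))) * indicator {A..B} u * indicator {0<..} t \<partial>lborel) \<partial>lborel)"
    by (rule nn_integral_cong) (auto simp: eq1 nn_integral_multc split: split_indicator)
  also have "\<dots> = (\<integral>\<^sup>+u. (\<integral>\<^sup>+t. ennreal (exp (-(t*u))) * indicator {A..B} u * indicator {0<..} t \<partial>lborel) \<partial>lborel)"
    by (rule lborel_pair.Fubini') measurable
  also have "\<dots> = (\<integral>\<^sup>+u. ennreal (inverse u) * indicator {A..B} u \<partial>lborel)"
  proof (rule nn_integral_cong)
    fix u :: real
    show "(\<integral>\<^sup>+t. ennreal (exp (-(t*u))) * indicator {A..B} u * indicator {0<..} t \<partial>lborel)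
       = ennreal (inverse u) * indicator {A..B} u"
    proof (cases "u \<in> {A..B}")
      case True
      then have "0 < u" using A by auto
      have "(\<integral>\<^sup>+t. ennreal (exp (-(t*u))) * indicator {A..B} u * indicator {0<..} t \<partial>lborel)
          = (\<integral>\<^sup>+t. ennreal (exp (-(t*u))) * indicator {0<..} t \<partial>lborel)"
        using True by (intro nn_integral_cong) auto
      also have "\<dots> = ennreal (1/u)" by (rule exp_nn_int[OF \<open>0 < u\<close>])
      finally show ?thesis using True by (simp add: field_simps)
    qed simp
  qed
  also have "\<dots> = ennreal (ln B - ln A)"
  proof (rule nn_integral_FTC_Icc)
    show "(\<lambda>u::real. inverse u :: real) \<in> borel_measurable borel" using borel_measurable_inverse[OF measurable_ident_sets[OF refl, of borel]] by (simp add: id_def)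
    fix x :: real assume "x \<in> {A..B}"
    then have "0 < x" using A by auto
    then show "(ln has_real_derivative inverse x) (at x)" by (auto intro!: derivative_eq_intros simp: field_simps)
    show "0 \<le> inverse x" using \<open>0 < x\<close> by simp
  qed (use AB in auto)
  finally show ?thesis .
qed

lemma exponent_id: fixes t c z :: real assumes p: "0 < 1+2*t" shows "-(z\<^sup>2/2) - t*(z+c)\<^sup>2 = -(t*c\<^sup>2/(1+2*t)) + (-(z - (-(2*t*c/(1+2*t))))\<^sup>2 / (2 * (1/(1+2*t))))"
proof -
  define d where "d = 1+2*t"
  have d: "d \<noteq> 0" using p by (simp add: d_def)
  have e1: "z - (-(2*t*c/d)) = (z*d + 2*t*c)/d" using d by (simp add: field_simps)
  have e2: "(-((z*d + 2*t*c)/d)\<^sup>2 / (2 * (1/d))) = -((z*d + 2*t*c)\<^sup>2/(2*d))"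
    using d by (simp add: power_divide power2_eq_square field_simps)
  have e3: "-(z\<^sup>2/2) - t*(z+c)\<^sup>2 = -(t*c\<^sup>2/d) - ((z*d + 2*t*c)\<^sup>2/(2*d))"
  proof -
    have "(-(z\<^sup>2/2) - t*(z+c)\<^sup>2) * (2*d) = (-(t*c\<^sup>2/d) - ((z*d + 2*t*c)\<^sup>2/(2*d))) * (2*d)"
    proof -
      have "(-(t*c\<^sup>2/d) - ((z*d + 2*t*c)\<^sup>2/(2*d))) * (2*d) = -(2*t*c\<^sup>2) - (z*d + 2*t*c)\<^sup>2"
        using d by (simp add: field_simps)
      also have "\<dots> = (-(z\<^sup>2/2) - t*(z+c)\<^sup>2) * (2*d)"
        unfolding d_def by (simp add: power2_eq_square algebra_simps)
      finally show ?thesis by (rule sym)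
    qed
    moreover have "2*d \<noteq> 0" using d by simp
    ultimately show ?thesis by (metis mult_right_cancel)
  qed
  show ?thesis unfolding d_def[symmetric] e1 using e2 e3 by (simp add: power2_eq_square)
qed

lemma gauss_laplace_pointwise:
  fixes t c z :: real assumes t: "0 \<le> t"
  shows "std_normal_density z * exp (-(t * (z+c)\<^sup>2)) =
    (exp (-(t*c\<^sup>2/(1+2*t))) / sqrt (1+2*t)) * normal_density (-(2*t*c/(1+2*t))) (1 / sqrt (1+2*t)) z"
proof -
  have p: "0 < 1 + 2*t" using t by simp
  have s2: "(1 / sqrt (1+2*t))\<^sup>2 = 1/(1+2*t)" using p by (simp add: power_divide)
  have sq: "sqrt (2 * pi * (1/(1+2*t))) = sqrt (2*pi) / sqrt (1+2*t)"
    using p by (simp add: real_sqrt_divide)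
  have ex: "-(z\<^sup>2/2) - t*(z+c)\<^sup>2 = -(t*c\<^sup>2/(1+2*t)) + (-(z - (-(2*t*c/(1+2*t))))\<^sup>2 / (2 * (1/(1+2*t))))"
    by (rule exponent_id[OF p])
  have "std_normal_density z * exp (-(t * (z+c)\<^sup>2)) = (1/sqrt (2*pi)) * exp (-(z\<^sup>2/2) - t*(z+c)\<^sup>2)"
    by (simp add: std_normal_density_def exp_diff exp_add[symmetric] field_simps)
  also have "\<dots> = (1/sqrt (2*pi)) * (exp (-(t*c\<^sup>2/(1+2*t))) * exp (-(z - (-(2*t*c/(1+2*t))))\<^sup>2 / (2 * (1/(1+2*t)))))"
    by (simp only: ex exp_add)
  also have "\<dots> = (exp (-(t*c\<^sup>2/(1+2*t))) / sqrt (1+2*t)) * normal_density (-(2*t*c/(1+2*t))) (1 / sqrt (1+2*t)) z"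
    unfolding normal_density_def s2 sq using p by (simp add: field_simps)
  finally show ?thesis .
qed

lemma gauss_laplace:
  fixes t c :: real assumes t: "0 \<le> t"
  shows "has_bochner_integral lborel (\<lambda>z. std_normal_density z * exp (-(t * (z+c)\<^sup>2)))
     (exp (-(t*c\<^sup>2/(1+2*t))) / sqrt (1+2*t))"
proof -
  have "has_bochner_integral lborel (\<lambda>z. (exp (-(t*c\<^sup>2/(1+2*t))) / sqrt (1+2*t)) * normal_density (-(2*t*c/(1+2*t))) (1 / sqrt (1+2*t)) z)
     ((exp (-(t*c\<^sup>2/(1+2*t))) / sqrt (1+2*t)) * 1)"
    by (intro has_bochner_integral_mult_right has_bochner_integral_integrable) (use t in \<open>auto simp: has_bochner_integral_iff intro!: integrable_normal_density integral_normal_density\<close>)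
  then show ?thesis by (simp add: gauss_laplace_pointwise[OF t])
qed

lemma abs_ln_sq_bound:
  fixes u :: real
  shows "\<bar>ln (u\<^sup>2)\<bar> \<le> u\<^sup>2 + 4 * (\<bar>u\<bar> powr (-1/2))"
proof (cases "u = 0")
  case True then show ?thesis by simp
next
  case False
  then have au: "0 < \<bar>u\<bar>" by simp
  have "u\<^sup>2 = \<bar>u\<bar>^2" by simp
  then have lnsq: "ln (u\<^sup>2) = 2 * ln \<bar>u\<bar>"
    using au ln_realpow[of "\<bar>u\<bar>" 2] by simp
  have pw: "0 \<le> \<bar>u\<bar> powr (-1/2)" by simp
  show ?thesis
  proof (cases "1 \<le> \<bar>u\<bar>")
    case True
    then have "0 \<le> ln \<bar>u\<bar>" by simp
    moreover have "ln (u\<^sup>2) \<le> u\<^sup>2 - 1" using au by (intro ln_le_minus_one) simp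
    ultimately show ?thesis using lnsq pw by linarith
  next
    case False
    then have "ln \<bar>u\<bar> \<le> 0" using au by simp
    moreover have "ln (\<bar>u\<bar> powr (-1/2)) \<le> \<bar>u\<bar> powr (-1/2) - 1"
      using au by (intro ln_le_minus_one) simp
    moreover have "ln (\<bar>u\<bar> powr (-1/2)) = -(1/2) * ln \<bar>u\<bar>"
      using au by (simp add: ln_powr)
    moreover have "0 \<le> u\<^sup>2" by simp
    ultimately show ?thesis using lnsq pw by linarith
  qed
qed

lemma integrable_powr_half_01:
  "integrable lborel (\<lambda>u::real. indicator {0..1} u * u powr (-1/2))"
proof -
  have "(\<lambda>u::real. u powr (-1/2)) integrable_on {0..1}"
    by (rule integrable_on_powr_from_0) auto
  then have "(\<lambda>u::real. u powr (-1/2)) absolutely_integrable_on {0..1}"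
    by (rule nonnegative_absolutely_integrable_1) simp
  then have "integrable lebesgue (\<lambda>u::real. indicator {0..1} u *\<^sub>R u powr (-1/2))"
    by (simp add: set_integrable_def)
  moreover have m: "(\<lambda>u::real. indicator {0..1} u *\<^sub>R u powr (-1/2)) \<in> borel_measurable lborel"
    by measurable
  ultimately show ?thesis
    using integrable_completion[OF m] by simp
qed

lemma integrable_abs_powr_half:
  "integrable lborel (\<lambda>u::real. indicator {-1..1} u * \<bar>u\<bar> powr (-1/2))"
proof -
  let ?k = "\<lambda>u::real. indicator {0..1} u * u powr (-1/2)"
  have i1: "integrable lborel ?k" by (rule integrable_powr_half_01)
  have i2: "integrable lborel (\<lambda>u. ?k (0 + (-1) * u))"
    by (rule lborel_integrable_real_affine[OF i1]) simp
  have "integrable lborel (\<lambda>u. ?k u + ?k (0 + (-1) * u))" using i1 i2 by simp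
  moreover have "(\<lambda>u. ?k u + ?k (0 + (-1) * u)) = (\<lambda>u::real. indicator {-1..1} u * \<bar>u\<bar> powr (-1/2))"
    by (auto simp: indicator_def fun_eq_iff)
  ultimately show ?thesis by simp
qed

lemma std_normal_le: "std_normal_density z \<le> 1 / sqrt (2*pi)"
proof -
  have "exp (-(z\<^sup>2/2)) \<le> 1" by simp
  then show ?thesis unfolding std_normal_density_def
    by (simp add: divide_right_mono)
qed

lemma integrable_ln_shift:
  fixes c :: real
  shows "integrable lborel (\<lambda>z. std_normal_density z * ln ((z+c)\<^sup>2))"
proof (rule Bochner_Integration.integrable_bound)
  let ?f = "\<lambda>z. std_normal_density z * z^2 + (2*c) * (std_normal_density z * z^1) + c\<^sup>2 * std_normal_density z
     + 4 * ((1 / sqrt (2*pi)) * (indicator {-1..1} (c + 1*z) * \<bar>c + 1*z\<bar> powr (-1/2)) + std_normal_density z)"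
  show "integrable lborel ?f"
    by (intro Bochner_Integration.integrable_add Bochner_Integration.integrable_mult_right integrable_std_normal_moment
        lborel_integrable_real_affine[OF integrable_abs_powr_half] integrable_normal_density) auto
  show "(\<lambda>z. std_normal_density z * ln ((z+c)\<^sup>2)) \<in> borel_measurable lborel" by measurable
  show "AE z in lborel. norm (std_normal_density z * ln ((z+c)\<^sup>2)) \<le> norm (?f z)"
  proof (rule AE_I2)
    fix z :: real
    let ?g = "std_normal_density z"
    have g0: "0 \<le> ?g" by simp
    have b1: "\<bar>ln ((z+c)\<^sup>2)\<bar> \<le> (z+c)\<^sup>2 + 4 * (\<bar>z+c\<bar> powr (-1/2))" by (rule abs_ln_sq_bound)
    have b2: "?g * \<bar>z+c\<bar> powr (-1/2) \<le> (1 / sqrt (2*pi)) * (indicator {-1..1} (c + 1*z) * \<bar>c + 1*z\<bar> powr (-1/2)) + ?g"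
    proof (cases "\<bar>z+c\<bar> \<le> 1")
      case True
      then have "?g * \<bar>z+c\<bar> powr (-1/2) \<le> (1 / sqrt (2*pi)) * \<bar>z+c\<bar> powr (-1/2)"
        by (intro mult_right_mono std_normal_le) simp
      moreover have "indicator {-1..1} (c + 1*z) = (1::real)" using True by (simp add: indicator_def add.commute abs_le_iff)
      ultimately have "?g * \<bar>z+c\<bar> powr (-1/2) \<le> (1 / sqrt (2*pi)) * (indicator {-1..1} (c + 1*z) * \<bar>c + 1*z\<bar> powr (-1/2))"
        by (simp add: add.commute)
      then show ?thesis using g0 by linarith
    next
      case False
      then have ge: "1 \<le> \<bar>z+c\<bar> powr (1/2)"
        by (intro ge_one_powr_ge_zero) auto
      have "\<bar>z+c\<bar> powr (-1/2) = 1 / \<bar>z+c\<bar> powr (1/2)"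
        by (simp add: powr_minus_divide)
      moreover have "1 / \<bar>z+c\<bar> powr (1/2) \<le> 1" using ge by (simp add: divide_le_eq_1)
      ultimately have "\<bar>z+c\<bar> powr (-1/2) \<le> 1" by simp
      then have "?g * \<bar>z+c\<bar> powr (-1/2) \<le> ?g" using g0 by (simp add: mult_left_le)
      moreover have "0 \<le> (1 / sqrt (2*pi)) * (indicator {-1..1} (c + 1*z) * \<bar>c + 1*z\<bar> powr (-1/2))"
        by (simp add: indicator_def)
      ultimately show ?thesis by linarith
    qed
    have "norm (?g * ln ((z+c)\<^sup>2)) = ?g * \<bar>ln ((z+c)\<^sup>2)\<bar>" using g0 by (simp add: abs_mult)
    also have "\<dots> \<le> ?g * ((z+c)\<^sup>2 + 4 * (\<bar>z+c\<bar> powr (-1/2)))" using b1 g0 by (rule mult_left_mono)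
    also have "\<dots> = ?g * z^2 + (2*c) * (?g * z^1) + c\<^sup>2 * ?g + 4 * (?g * \<bar>z+c\<bar> powr (-1/2))"
      by (simp add: power2_eq_square algebra_simps)
    also have "\<dots> \<le> ?f z" using b2 by simp
    also have "\<dots> \<le> norm (?f z)" by simp
    finally show "norm (?g * ln ((z+c)\<^sup>2)) \<le> norm (?f z)" .
  qed
qed

lemma frullani_nn2:
  fixes A B :: real assumes A: "0 < A" and B: "0 < B"
  shows "(\<integral>\<^sup>+t. ennreal ((exp (-(t*A)) - exp (-(t*B))) / t) * indicator {0<..} t \<partial>lborel)
    = ennreal (ln B - ln A)"
proof (cases "A \<le> B")
  case True then show ?thesis using frullani_nn[OF A True] by simp
next
  case False
  then have "ln B - ln A \<le> 0" using A B by simp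
  moreover have z: "ennreal ((exp (-(t*A)) - exp (-(t*B))) / t) * indicator {0<..} t = 0" for t
  proof (cases "0 < t")
    case True
    then have "exp (-(t*A)) \<le> exp (-(t*B))" using False by simp
    then show ?thesis using True by (simp add: divide_nonpos_pos ennreal_neg)
  qed simp
  have "(\<integral>\<^sup>+t. ennreal ((exp (-(t*A)) - exp (-(t*B))) / t) * indicator {0<..} t \<partial>lborel) = (\<integral>\<^sup>+t. 0 \<partial>(lborel::real measure))"
    by (rule nn_integral_cong) (rule z)
  ultimately show ?thesis by (simp add: ennreal_neg)
qed

lemma nn_pos_neg_le:
  fixes f :: "'a \<Rightarrow> real"
  assumes f: "integrable M f" and nn: "0 \<le> integral\<^sup>L M f"
  shows "(\<integral>\<^sup>+x. ennreal (- f x) \<partial>M) \<le> (\<integral>\<^sup>+x. ennreal (f x) \<partial>M)"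
proof -
  have fnorm: "(\<integral>\<^sup>+x. ennreal (norm (f x)) \<partial>M) < top" using f unfolding integrable_iff_bounded by simp
  have fin1: "(\<integral>\<^sup>+x. ennreal (f x) \<partial>M) < top"
    by (rule le_less_trans[OF nn_integral_mono fnorm]) (simp add: ennreal_leI)
  have fin2: "(\<integral>\<^sup>+x. ennreal (- f x) \<partial>M) < top"
    by (rule le_less_trans[OF nn_integral_mono fnorm]) (simp add: ennreal_leI)
  have "enn2real (\<integral>\<^sup>+x. ennreal (- f x) \<partial>M) \<le> enn2real (\<integral>\<^sup>+x. ennreal (f x) \<partial>M)"
    using nn real_lebesgue_integral_def[OF f] by simp
  then have "ennreal (enn2real (\<integral>\<^sup>+x. ennreal (- f x) \<partial>M)) \<le> ennreal (enn2real (\<integral>\<^sup>+x. ennreal (f x) \<partial>M))"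
    by (rule ennreal_leI)
  moreover have "ennreal (enn2real (\<integral>\<^sup>+x. ennreal (- f x) \<partial>M)) = (\<integral>\<^sup>+x. ennreal (- f x) \<partial>M)"
    using fin2 by (rule ennreal_enn2real)
  moreover have "ennreal (enn2real (\<integral>\<^sup>+x. ennreal (f x) \<partial>M)) = (\<integral>\<^sup>+x. ennreal (f x) \<partial>M)"
    using fin1 by (rule ennreal_enn2real)
  ultimately show ?thesis by simp
qed

lemma nn_pos_neg_ge:
  fixes f :: "'a \<Rightarrow> real"
  assumes f: "integrable M f" and le: "(\<integral>\<^sup>+x. ennreal (- f x) \<partial>M) \<le> (\<integral>\<^sup>+x. ennreal (f x) \<partial>M)"
  shows "0 \<le> integral\<^sup>L M f"
proof -
  have fnorm: "(\<integral>\<^sup>+x. ennreal (norm (f x)) \<partial>M) < top" using f unfolding integrable_iff_bounded by simp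
  have fin1: "(\<integral>\<^sup>+x. ennreal (f x) \<partial>M) < top"
    by (rule le_less_trans[OF nn_integral_mono fnorm]) (simp add: ennreal_leI)
  have "enn2real (\<integral>\<^sup>+x. ennreal (- f x) \<partial>M) \<le> enn2real (\<integral>\<^sup>+x. ennreal (f x) \<partial>M)"
    using le fin1 by (simp add: enn2real_mono)
  then show ?thesis using real_lebesgue_integral_def[OF f] by simp
qed

lemma laplace_ineq:
  fixes t c :: real assumes t: "0 \<le> t"
  shows "exp (-(t*c\<^sup>2/(1+2*t))) / sqrt (1+2*t) \<le> 1 / sqrt (1+2*(t*(1+c\<^sup>2)))"
proof -
  define x where "x = t*c\<^sup>2/(1+2*t)"
  have p: "0 < 1+2*t" using t by simp
  have x0: "0 \<le> x" unfolding x_def using t by simp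
  have prod: "1+2*(t*(1+c\<^sup>2)) = (1+2*t)*(1+2*x)"
    unfolding x_def using p by (simp add: field_simps)
  have "1 + 2*x \<le> exp (2*x)" using exp_ge_add_one_self[of "2*x"] by simp
  also have "exp (2*x) = (exp x)\<^sup>2" by (simp add: power2_eq_square exp_add[symmetric])
  finally have "sqrt (1+2*x) \<le> exp x"
    using real_sqrt_le_mono[of "1+2*x" "(exp x)\<^sup>2"] by simp
  then have "exp (-x) \<le> 1 / sqrt (1+2*x)"
    using x0 by (simp add: exp_minus field_simps)
  then have "exp (-x) / sqrt (1+2*t) \<le> 1 / sqrt (1+2*x) / sqrt (1+2*t)"
    by (rule divide_right_mono) (use t in simp)
  also have "\<dots> = 1 / sqrt (1+2*(t*(1+c\<^sup>2)))"
    unfolding prod by (simp add: real_sqrt_mult)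
  finally show ?thesis unfolding x_def by simp
qed

lemma core_ineq:
  fixes c :: real
  shows "ln (1 + c\<^sup>2) + (\<integral>z. std_normal_density z * ln (z\<^sup>2) \<partial>lborel)
    \<le> (\<integral>z. std_normal_density z * ln ((z+c)\<^sup>2) \<partial>lborel)"
proof -
  define a2 where "a2 = 1 + c\<^sup>2"
  have a2: "0 < a2" unfolding a2_def by (simp add: add_pos_nonneg)
  let ?g = "std_normal_density"
  have iB: "integrable lborel (\<lambda>z. ?g z * ln ((z+c)\<^sup>2))" by (rule integrable_ln_shift)
  have i0: "integrable lborel (\<lambda>z. ?g z * ln (z\<^sup>2))" using integrable_ln_shift[of 0] by simp
  have AEnz: "AE z in lborel. z \<noteq> 0 \<and> z \<noteq> -c"
    using AE_lborel_singleton[of 0] AE_lborel_singleton[of "-c"] by eventually_elim auto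
  have eqA: "AE z in lborel. ?g z * ln (a2 * z\<^sup>2) = ln a2 * ?g z + ?g z * ln (z\<^sup>2)"
    using AEnz
  proof eventually_elim
    case (elim z)
    then have "ln (a2 * z\<^sup>2) = ln a2 + ln (z\<^sup>2)" using a2 by (simp add: ln_mult)
    then show ?case by (simp add: algebra_simps)
  qed
  have iA': "integrable lborel (\<lambda>z. ln a2 * ?g z + ?g z * ln (z\<^sup>2))"
    by (intro Bochner_Integration.integrable_add Bochner_Integration.integrable_mult_right i0) auto
  have iA: "integrable lborel (\<lambda>z. ?g z * ln (a2 * z\<^sup>2))"
    by (rule integrable_cong_AE[THEN iffD2, OF _ _ eqA iA']) measurable
  have intA: "(\<integral>z. ?g z * ln (a2 * z\<^sup>2) \<partial>lborel) = ln a2 + (\<integral>z. ?g z * ln (z\<^sup>2) \<partial>lborel)"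
  proof -
    have "(\<integral>z. ?g z * ln (a2 * z\<^sup>2) \<partial>lborel) = (\<integral>z. ln a2 * ?g z + ?g z * ln (z\<^sup>2) \<partial>lborel)"
      by (rule integral_cong_AE[OF _ _ eqA]) measurable
    also have "\<dots> = ln a2 * (\<integral>z. ?g z \<partial>lborel) + (\<integral>z. ?g z * ln (z\<^sup>2) \<partial>lborel)"
      by (subst Bochner_Integration.integral_add) (auto intro: i0)
    finally show ?thesis by simp
  qed
  define h where "h z = ?g z * ln ((z+c)\<^sup>2) - ?g z * ln (a2 * z\<^sup>2)" for z
  have ih: "integrable lborel h" unfolding h_def using iB iA by auto
  define F where "F z t = (exp (-(t*(a2*z\<^sup>2))) - exp (-(t*((z+c)\<^sup>2)))) / t" for z t :: real
  have claimP: "AE z in lborel. ennreal (h z) = (\<integral>\<^sup>+t. ennreal (?g z * F z t) * indicator {0<..} t \<partial>lborel)"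
    using AEnz
  proof eventually_elim
    case (elim z)
    have A: "0 < a2 * z\<^sup>2" using elim a2 by simp
    have B: "0 < (z+c)\<^sup>2" using elim by (simp add: add_eq_0_iff)
    have "(\<integral>\<^sup>+t. ennreal (?g z * F z t) * indicator {0<..} t \<partial>lborel)
        = (\<integral>\<^sup>+t. ennreal (?g z) * (ennreal (F z t) * indicator {0<..} t) \<partial>lborel)"
      by (rule nn_integral_cong) (simp add: ennreal_mult' mult.assoc)
    also have "\<dots> = ennreal (?g z) * (\<integral>\<^sup>+t. ennreal (F z t) * indicator {0<..} t \<partial>lborel)"
      by (rule nn_integral_cmult) (unfold F_def, measurable)
    also have "(\<integral>\<^sup>+t. ennreal (F z t) * indicator {0<..} t \<partial>lborel) = ennreal (ln ((z+c)\<^sup>2) - ln (a2 * z\<^sup>2))"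
      unfolding F_def by (rule frullani_nn2[OF A B])
    also have "ennreal (?g z) * ennreal (ln ((z+c)\<^sup>2) - ln (a2 * z\<^sup>2)) = ennreal (h z)"
      unfolding h_def by (simp add: ennreal_mult'[symmetric] right_diff_distrib)
    finally show ?case by simp
  qed
  have claimN: "AE z in lborel. ennreal (- h z) = (\<integral>\<^sup>+t. ennreal (- (?g z * F z t)) * indicator {0<..} t \<partial>lborel)"
    using AEnz
  proof eventually_elim
    case (elim z)
    have A: "0 < a2 * z\<^sup>2" using elim a2 by simp
    have B: "0 < (z+c)\<^sup>2" using elim by (simp add: add_eq_0_iff)
    have "(\<integral>\<^sup>+t. ennreal (- (?g z * F z t)) * indicator {0<..} t \<partial>lborel)
        = (\<integral>\<^sup>+t. ennreal (?g z) * (ennreal ((exp (-(t*((z+c)\<^sup>2))) - exp (-(t*(a2*z\<^sup>2)))) / t) * indicator {0<..} t) \<partial>lborel)"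
    proof (rule nn_integral_cong)
      fix t :: real
      have eqr: "-(?g z * F z t) = ?g z * ((exp (-(t*((z+c)\<^sup>2))) - exp (-(t*(a2*z\<^sup>2)))) / t)"
        unfolding F_def by (simp only: minus_mult_right minus_divide_left minus_diff_eq)
      show "ennreal (- (?g z * F z t)) * indicator {0<..} t = ennreal (?g z) * (ennreal ((exp (-(t*((z+c)\<^sup>2))) - exp (-(t*(a2*z\<^sup>2)))) / t) * indicator {0<..} t)"
        unfolding eqr ennreal_mult'[OF normal_density_nonneg] by (simp only: mult.assoc)
    qed
    also have "\<dots> = ennreal (?g z) * (\<integral>\<^sup>+t. ennreal ((exp (-(t*((z+c)\<^sup>2))) - exp (-(t*(a2*z\<^sup>2)))) / t) * indicator {0<..} t \<partial>lborel)"
      by (rule nn_integral_cmult) measurable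
    also have "(\<integral>\<^sup>+t. ennreal ((exp (-(t*((z+c)\<^sup>2))) - exp (-(t*(a2*z\<^sup>2)))) / t) * indicator {0<..} t \<partial>lborel) = ennreal (ln (a2 * z\<^sup>2) - ln ((z+c)\<^sup>2))"
      by (rule frullani_nn2[OF B A])
    also have "ennreal (?g z) * ennreal (ln (a2 * z\<^sup>2) - ln ((z+c)\<^sup>2)) = ennreal (- h z)"
      unfolding h_def by (simp add: ennreal_mult'[symmetric] right_diff_distrib)
    finally show ?case by simp
  qed
  have intF: "has_bochner_integral lborel (\<lambda>z. ?g z * F z t)
      ((1 / sqrt (1+2*(t*a2)) - exp (-(t*c\<^sup>2/(1+2*t))) / sqrt (1+2*t)) / t)" if t: "0 < t" for t
  proof -
    have h1: "has_bochner_integral lborel (\<lambda>z. ?g z * exp (-((t*a2) * (z+0)\<^sup>2)))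
       (exp (-((t*a2)*0\<^sup>2/(1+2*(t*a2)))) / sqrt (1+2*(t*a2)))"
      by (rule gauss_laplace) (use t a2 in simp)
    have h2: "has_bochner_integral lborel (\<lambda>z. ?g z * exp (-(t * (z+c)\<^sup>2)))
       (exp (-(t*c\<^sup>2/(1+2*t))) / sqrt (1+2*t))"
      by (rule gauss_laplace) (use t in simp)
    have "has_bochner_integral lborel (\<lambda>z. (?g z * exp (-((t*a2) * (z+0)\<^sup>2)) - ?g z * exp (-(t * (z+c)\<^sup>2))) / t)
       ((exp (-((t*a2)*0\<^sup>2/(1+2*(t*a2)))) / sqrt (1+2*(t*a2)) - exp (-(t*c\<^sup>2/(1+2*t))) / sqrt (1+2*t)) / t)"
      by (intro has_bochner_integral_divide_zero has_bochner_integral_diff h1 h2)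
    moreover have "(\<lambda>z. (?g z * exp (-((t*a2) * (z+0)\<^sup>2)) - ?g z * exp (-(t * (z+c)\<^sup>2))) / t) = (\<lambda>z. ?g z * F z t)"
      by (rule ext) (simp add: F_def right_diff_distrib mult.assoc)
    ultimately show ?thesis by simp
  qed
  have stepT: "indicator {0<..} t * (\<integral>\<^sup>+z. ennreal (- (?g z * F z t)) \<partial>lborel)
      \<le> indicator {0<..} t * (\<integral>\<^sup>+z. ennreal (?g z * F z t) \<partial>lborel)" for t :: real
  proof (cases "0 < t")
    case True
    have "(\<integral>\<^sup>+z. ennreal (- (?g z * F z t)) \<partial>lborel) \<le> (\<integral>\<^sup>+z. ennreal (?g z * F z t) \<partial>lborel)"
    proof (rule nn_pos_neg_le)
      show "integrable lborel (\<lambda>z. ?g z * F z t)" using intF[OF True] by (simp add: has_bochner_integral_iff)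
      have "0 \<le> (1 / sqrt (1+2*(t*a2)) - exp (-(t*c\<^sup>2/(1+2*t))) / sqrt (1+2*t)) / t"
        using laplace_ineq[of t c] True unfolding a2_def by simp
      then show "0 \<le> (\<integral>z. ?g z * F z t \<partial>lborel)"
        using intF[OF True] by (simp add: has_bochner_integral_iff)
    qed
    then show ?thesis by (simp add: mult_left_mono)
  qed simp
  have measF: "(\<lambda>(z, t). ennreal (?g z * F z t) * indicator {0<..} t) \<in> borel_measurable (lborel \<Otimes>\<^sub>M lborel)"
    unfolding F_def by measurable
  have measF': "(\<lambda>(z, t). ennreal (- (?g z * F z t)) * indicator {0<..} t) \<in> borel_measurable (lborel \<Otimes>\<^sub>M lborel)"
    unfolding F_def by measurable
  have "(\<integral>\<^sup>+z. ennreal (- h z) \<partial>lborel) = (\<integral>\<^sup>+z. (\<integral>\<^sup>+t. ennreal (- (?g z * F z t)) * indicator {0<..} t \<partial>lborel) \<partial>lborel)"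
    by (rule nn_integral_cong_AE[OF claimN])
  also have "\<dots> = (\<integral>\<^sup>+t. (\<integral>\<^sup>+z. ennreal (- (?g z * F z t)) * indicator {0<..} t \<partial>lborel) \<partial>lborel)"
    by (rule lborel_pair.Fubini'[OF measF', symmetric])
  also have "\<dots> = (\<integral>\<^sup>+t. indicator {0<..} t * (\<integral>\<^sup>+z. ennreal (- (?g z * F z t)) \<partial>lborel) \<partial>lborel)"
  proof (rule nn_integral_cong)
    fix t :: real
    have "(\<integral>\<^sup>+z. ennreal (- (?g z * F z t)) * indicator {0<..} t \<partial>lborel) = (\<integral>\<^sup>+z. ennreal (- (?g z * F z t)) \<partial>lborel) * indicator {0<..} t"
      by (rule nn_integral_multc) (unfold F_def, measurable)
    then show "(\<integral>\<^sup>+z. ennreal (- (?g z * F z t)) * indicator {0<..} t \<partial>lborel) = indicator {0<..} t * (\<integral>\<^sup>+z. ennreal (- (?g z * F z t)) \<partial>lborel)"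
      by (simp add: mult.commute)
  qed
  also have "\<dots> \<le> (\<integral>\<^sup>+t. indicator {0<..} t * (\<integral>\<^sup>+z. ennreal (?g z * F z t) \<partial>lborel) \<partial>lborel)"
    by (rule nn_integral_mono) (rule stepT)
  also have "\<dots> = (\<integral>\<^sup>+t. (\<integral>\<^sup>+z. ennreal (?g z * F z t) * indicator {0<..} t \<partial>lborel) \<partial>lborel)"
  proof (rule nn_integral_cong)
    fix t :: real
    have "(\<integral>\<^sup>+z. ennreal (?g z * F z t) * indicator {0<..} t \<partial>lborel) = (\<integral>\<^sup>+z. ennreal (?g z * F z t) \<partial>lborel) * indicator {0<..} t"
      by (rule nn_integral_multc) (unfold F_def, measurable)
    then show "indicator {0<..} t * (\<integral>\<^sup>+z. ennreal (?g z * F z t) \<partial>lborel) = (\<integral>\<^sup>+z. ennreal (?g z * F z t) * indicator {0<..} t \<partial>lborel)"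
      by (simp add: mult.commute)
  qed
  also have "\<dots> = (\<integral>\<^sup>+z. (\<integral>\<^sup>+t. ennreal (?g z * F z t) * indicator {0<..} t \<partial>lborel) \<partial>lborel)"
    by (rule lborel_pair.Fubini'[OF measF])
  also have "\<dots> = (\<integral>\<^sup>+z. ennreal (h z) \<partial>lborel)"
    by (rule nn_integral_cong_AE[OF claimP, symmetric])
  finally have "0 \<le> (\<integral>z. h z \<partial>lborel)" by (rule nn_pos_neg_ge[OF ih])
  then have "(\<integral>z. ?g z * ln (a2 * z\<^sup>2) \<partial>lborel) \<le> (\<integral>z. ?g z * ln ((z+c)\<^sup>2) \<partial>lborel)"
    unfolding h_def using iA iB by simp
  then show ?thesis using intA unfolding a2_def by simp
qed

lemma C1_eq: "C1 = - (\<integral>z. std_normal_density z * ln (z\<^sup>2) \<partial>lborel)"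
proof -
  have "(\<integral>z. std_normal_density z * ln (z\<^sup>2) \<partial>lborel) = (\<integral>z. (1 / sqrt (2*pi)) * (ln (z\<^sup>2) * exp (- (z\<^sup>2) / 2)) \<partial>lborel)"
    by (rule Bochner_Integration.integral_cong) (simp_all add: std_normal_density_def)
  also have "\<dots> = (1 / sqrt (2*pi)) * (\<integral>z. ln (z\<^sup>2) * exp (- (z\<^sup>2) / 2) \<partial>lborel)"
    by (rule integral_mult_right_zero)
  finally show ?thesis unfolding C1_def by simp
qed

lemma std_moment2: fixes m s :: real shows "(\<integral>z. std_normal_density z * (m + s*z)\<^sup>2 \<partial>lborel) = m\<^sup>2 + s\<^sup>2"
  and std_moment2_int: "integrable lborel (\<lambda>z. std_normal_density z * (m + s*z)\<^sup>2)"
proof -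
  let ?g = "std_normal_density"
  have e: "(\<lambda>z. ?g z * (m + s*z)\<^sup>2) = (\<lambda>z. m\<^sup>2 * ?g z + (2 * m * s) * (?g z * z ^ (2 * 0 + 1)) + s\<^sup>2 * (?g z * z ^ (2 * 1)))"
    by (rule ext) (simp add: power2_eq_square algebra_simps)
  have i1: "integrable lborel (\<lambda>z. ?g z * z^(2*0+1))" by (rule integrable_std_normal_moment)
  have i2: "integrable lborel (\<lambda>z. ?g z * z^(2*1))" by (rule integrable_std_normal_moment)
  show "integrable lborel (\<lambda>z. ?g z * (m + s*z)\<^sup>2)" unfolding e
    using i1 i2 by (intro Bochner_Integration.integrable_add Bochner_Integration.integrable_mult_right) auto
  have v1: "(\<integral>z. ?g z * z^(2*0+1) \<partial>lborel) = 0" by (rule integral_std_normal_moment_odd)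
  have v2: "(\<integral>z. ?g z * z^(2*1) \<partial>lborel) = 1" using integral_std_normal_moment_even[of 1] by simp
  show "(\<integral>z. ?g z * (m + s*z)\<^sup>2 \<partial>lborel) = m\<^sup>2 + s\<^sup>2" unfolding e
    using i1 i2 v1 v2 by (simp del: power_Suc)
qed

lemma (in prob_space) normal_term:
  assumes s: "0 < s" and D: "distributed M lborel U (normal_density m s)"
  shows "integrable M (\<lambda>\<omega>. (U \<omega>)\<^sup>2)"
    and "expectation (\<lambda>\<omega>. (U \<omega>)\<^sup>2) = m\<^sup>2 + s\<^sup>2"
    and "integrable M (\<lambda>\<omega>. ln ((U \<omega>)\<^sup>2))"
    and "ln (m\<^sup>2 + s\<^sup>2) - C1 \<le> expectation (\<lambda>\<omega>. ln ((U \<omega>)\<^sup>2))"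
    and "AE \<omega> in M. U \<omega> \<noteq> 0"
proof -
  let ?g = "std_normal_density"
  have DY: "distributed M lborel (\<lambda>x. (U x - m) / s) ?g"
    using normal_standard_normal_convert[OF s] D by simp
  have Ueq: "U \<omega> = m + s * ((U \<omega> - m) / s)" for \<omega> using s by simp
  have f1: "(\<lambda>\<omega>. (U \<omega>)\<^sup>2) = (\<lambda>\<omega>. (\<lambda>z. (m + s*z)\<^sup>2) ((U \<omega> - m) / s))"
    by (rule ext) (subst Ueq, simp)
  have f2: "(\<lambda>\<omega>. ln ((U \<omega>)\<^sup>2)) = (\<lambda>\<omega>. (\<lambda>z. ln ((m + s*z)\<^sup>2)) ((U \<omega> - m) / s))"
    by (rule ext) (subst Ueq, simp)
  show "integrable M (\<lambda>\<omega>. (U \<omega>)\<^sup>2)" unfolding f1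
    by (rule distributed_integrable[OF DY, THEN iffD1]) (simp_all add: std_moment2_int)
  show "expectation (\<lambda>\<omega>. (U \<omega>)\<^sup>2) = m\<^sup>2 + s\<^sup>2" unfolding f1
    by (subst distributed_integral[OF DY, symmetric]) (simp_all add: std_moment2)
  have AEz: "AE z in lborel. ?g z * ln ((m + s*z)\<^sup>2) = ?g z * ln (s\<^sup>2) + ?g z * ln ((z + m/s)\<^sup>2)"
    using AE_lborel_singleton[of "-m/s"]
  proof eventually_elim
    case (elim z)
    have ne: "z + m/s \<noteq> 0" using elim s by (auto simp: field_simps)
    have "(m + s*z)\<^sup>2 = s\<^sup>2 * (z + m/s)\<^sup>2" using s by (simp add: field_simps power2_eq_square)
    then have "ln ((m + s*z)\<^sup>2) = ln (s\<^sup>2) + ln ((z + m/s)\<^sup>2)" using s ne by (simp add: ln_mult)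
    then show ?case by (simp add: algebra_simps)
  qed
  have iR: "integrable lborel (\<lambda>z. ?g z * ln (s\<^sup>2) + ?g z * ln ((z + m/s)\<^sup>2))"
    by (intro Bochner_Integration.integrable_add integrable_ln_shift Bochner_Integration.integrable_mult_left) auto
  have iL: "integrable lborel (\<lambda>z. ?g z * ln ((m + s*z)\<^sup>2))"
    by (rule integrable_cong_AE[THEN iffD2, OF _ _ AEz iR]) measurable
  show "integrable M (\<lambda>\<omega>. ln ((U \<omega>)\<^sup>2))" unfolding f2
    by (rule distributed_integrable[OF DY, THEN iffD1]) (simp_all add: iL)
  have "expectation (\<lambda>\<omega>. ln ((U \<omega>)\<^sup>2)) = (\<integral>z. ?g z * ln ((m + s*z)\<^sup>2) \<partial>lborel)" unfolding f2
    by (subst distributed_integral[OF DY, symmetric]) simp_all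
  also have "\<dots> = (\<integral>z. ?g z * ln (s\<^sup>2) + ?g z * ln ((z + m/s)\<^sup>2) \<partial>lborel)"
    by (rule integral_cong_AE[OF _ _ AEz]) measurable
  also have "\<dots> = ln (s\<^sup>2) + (\<integral>z. ?g z * ln ((z + m/s)\<^sup>2) \<partial>lborel)"
    by (subst Bochner_Integration.integral_add) (auto intro: integrable_ln_shift)
  finally have E: "expectation (\<lambda>\<omega>. ln ((U \<omega>)\<^sup>2)) = ln (s\<^sup>2) + (\<integral>z. ?g z * ln ((z + m/s)\<^sup>2) \<partial>lborel)" .
  have "ln (m\<^sup>2 + s\<^sup>2) = ln (s\<^sup>2) + ln (1 + (m/s)\<^sup>2)"
  proof -
    have "m\<^sup>2 + s\<^sup>2 = s\<^sup>2 * (1 + (m/s)\<^sup>2)" using s by (simp add: field_simps power2_eq_square)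
    moreover have "0 < 1 + (m/s)\<^sup>2" by (simp add: add_pos_nonneg)
    ultimately show ?thesis using s by (simp add: ln_mult)
  qed
  then show "ln (m\<^sup>2 + s\<^sup>2) - C1 \<le> expectation (\<lambda>\<omega>. ln ((U \<omega>)\<^sup>2))"
    using core_ineq[of "m/s"] E C1_eq by simp
  have "AE x in density lborel (normal_density m s). x \<noteq> 0"
    by (subst AE_density) (auto intro: AE_mp[OF AE_lborel_singleton[of 0]])
  then have "AE x in distr M lborel U. x \<noteq> 0"
    by (subst distributed_distr_eq_density[OF D])
  then show "AE \<omega> in M. U \<omega> \<noteq> 0"
    by (rule AE_distrD[OF distributed_measurable[OF D]])
qed

definition qf :: "'i set \<Rightarrow> ('i \<Rightarrow> 'i \<Rightarrow> real) \<Rightarrow> ('i \<Rightarrow> real) \<Rightarrow> real \<Rightarrow> ('i \<Rightarrow> real) \<Rightarrow> real" where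
  "qf S Q a b x = (\<Sum>i\<in>S. \<Sum>j\<in>S. Q i j * x i * x j) + 2 * (\<Sum>i\<in>S. a i * x i) + b"

lemma quad_nonneg_lead:
  fixes \<alpha> \<beta> \<gamma> :: real
  assumes "\<And>t. 0 \<le> \<alpha> * t\<^sup>2 + \<beta> * t + \<gamma>"
  shows "0 \<le> \<alpha>"
proof (rule ccontr)
  assume "\<not> 0 \<le> \<alpha>"
  then have a: "\<alpha> < 0" by simp
  define na where "na = -\<alpha>"
  have na: "0 < na" using a unfolding na_def by simp
  define t where "t = (\<bar>\<beta>\<bar> + \<bar>\<gamma>\<bar> + 1) / na + 1"
  have "0 \<le> (\<bar>\<beta>\<bar> + \<bar>\<gamma>\<bar> + 1) / na" using na by (intro divide_nonneg_pos) auto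
  then have t1: "1 \<le> t" unfolding t_def by linarith
  have "(\<bar>\<beta>\<bar> + \<bar>\<gamma>\<bar> + 1) / na \<le> t" unfolding t_def by simp
  then have "\<bar>\<beta>\<bar> + \<bar>\<gamma>\<bar> + 1 \<le> t * na" using pos_divide_le_eq[OF na] by blast
  then have at: "\<alpha> * t + \<bar>\<beta>\<bar> + \<bar>\<gamma>\<bar> \<le> -1" unfolding na_def by (simp add: algebra_simps)
  have "\<alpha> * t\<^sup>2 + \<beta> * t + \<gamma> \<le> \<alpha> * t\<^sup>2 + \<bar>\<beta>\<bar> * t + \<bar>\<gamma>\<bar> * t"
  proof -
    have "\<beta> * t \<le> \<bar>\<beta>\<bar> * t" using t1 by (intro mult_right_mono) auto
    moreover have "\<gamma> \<le> \<bar>\<gamma>\<bar> * t" using t1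
      by (metis abs_ge_self abs_ge_zero mult.right_neutral mult_left_mono order_trans)
    ultimately show ?thesis by simp
  qed
  also have "\<dots> = t * (\<alpha> * t + \<bar>\<beta>\<bar> + \<bar>\<gamma>\<bar>)" by (simp add: power2_eq_square algebra_simps)
  also have "\<dots> \<le> t * (-1)" using at t1 by (intro mult_left_mono) auto
  also have "\<dots> < 0" using t1 by simp
  finally show False using assms[of t] by simp
qed

lemma lin_nonneg_zero:
  fixes \<beta> \<gamma> :: real
  assumes "\<And>t. 0 \<le> \<beta> * t + \<gamma>"
  shows "\<beta> = 0"
proof (rule ccontr)
  assume b: "\<beta> \<noteq> 0"
  have "\<beta> * (-(\<bar>\<gamma>\<bar> + 1) / \<beta>) + \<gamma> = -(\<bar>\<gamma>\<bar> + 1) + \<gamma>" using b by simp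
  also have "\<dots> < 0" by linarith
  finally show False using assms[of "-(\<bar>\<gamma>\<bar> + 1) / \<beta>"] by simp
qed

lemma qf_upd:
  assumes "k \<notin> S"
  shows "qf S Q a b (x(k := t)) = qf S Q a b x"
  unfolding qf_def using assms
  by (intro arg_cong2[where f="(+)"] arg_cong2[where f="(*)"] sum.cong refl) auto

lemma qf_insert:
  assumes fin: "finite S" and k: "k \<notin> S" and sym: "\<And>i j. Q i j = Q j i"
  shows "qf (insert k S) Q a b x = Q k k * (x k)\<^sup>2 + 2 * x k * ((\<Sum>j\<in>S. Q k j * x j) + a k) + qf S Q a b x"
proof -
  have "(\<Sum>i\<in>insert k S. \<Sum>j\<in>insert k S. Q i j * x i * x j)
      = (\<Sum>j\<in>insert k S. Q k j * x k * x j) + (\<Sum>i\<in>S. \<Sum>j\<in>insert k S. Q i j * x i * x j)"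
    using fin k by (simp add: sum.insert)
  also have "(\<Sum>j\<in>insert k S. Q k j * x k * x j) = Q k k * x k * x k + (\<Sum>j\<in>S. Q k j * x k * x j)"
    using fin k by (simp add: sum.insert)
  also have "(\<Sum>i\<in>S. \<Sum>j\<in>insert k S. Q i j * x i * x j) = (\<Sum>i\<in>S. Q i k * x i * x k + (\<Sum>j\<in>S. Q i j * x i * x j))"
    using fin k by (intro sum.cong refl) (simp add: sum.insert)
  also have "\<dots> = (\<Sum>i\<in>S. Q k i * x k * x i) + (\<Sum>i\<in>S. \<Sum>j\<in>S. Q i j * x i * x j)"
    by (simp add: sum.distrib sym mult.commute mult.left_commute)
  finally have e1: "(\<Sum>i\<in>insert k S. \<Sum>j\<in>insert k S. Q i j * x i * x j)
      = Q k k * x k * x k + 2 * x k * (\<Sum>j\<in>S. Q k j * x j) + (\<Sum>i\<in>S. \<Sum>j\<in>S. Q i j * x i * x j)"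
    by (simp add: sum_distrib_left algebra_simps)
  have e2: "(\<Sum>i\<in>insert k S. a i * x i) = a k * x k + (\<Sum>i\<in>S. a i * x i)"
    using fin k by (simp add: sum.insert)
  show ?thesis unfolding qf_def e1 e2 by (simp add: power2_eq_square algebra_simps)
qed

lemma qf_decomp:
  fixes S :: "'i set"
  assumes "finite S"
  shows "(\<And>i j. Q i j = Q j i) \<Longrightarrow> (\<And>x. 0 \<le> qf S Q a b x) \<Longrightarrow>
    \<exists>(K::nat) l c. \<forall>x. qf S Q a b x = (\<Sum>m<K. ((\<Sum>i\<in>S. l m i * x i) + c m)\<^sup>2)"
  using assms
proof (induction S arbitrary: Q a b rule: finite_induct)
  case empty
  then have b: "0 \<le> b" unfolding qf_def by simp
  have H: "\<forall>x. qf {} Q a b x = (\<Sum>m<(1::nat). ((\<Sum>i\<in>{}. (\<lambda>_ _. 0::real) m i * x i) + (\<lambda>_. sqrt b) m)\<^sup>2)"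
    using b by (simp add: qf_def)
  show ?case by (rule exI, rule exI, rule exI, rule H)
next
  case (insert k S)
  note sym = insert.prems(1)
  define L where "L x = (\<Sum>j\<in>S. Q k j * x j) + a k" for x :: "'i \<Rightarrow> real"
  have Lupd: "L (x(k := t)) = L x" for x t
    unfolding L_def using insert.hyps by (intro arg_cong2[where f="(+)"] sum.cong refl) auto
  have exp: "qf (insert k S) Q a b x = Q k k * (x k)\<^sup>2 + 2 * x k * L x + qf S Q a b x" for x
    unfolding L_def by (rule qf_insert[OF insert.hyps(1,2) sym])
  have nn: "0 \<le> Q k k * t\<^sup>2 + (2 * L x) * t + qf S Q a b x" for x t
    using insert.prems(2)[of "x(k := t)"] unfolding exp Lupd qf_upd[OF insert.hyps(2)]
    by (simp add: algebra_simps)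
  have a0: "0 \<le> Q k k" using quad_nonneg_lead[OF nn] .
  show ?case
  proof (cases "Q k k = 0")
    case True
    have L0: "L x = 0" for x
      using lin_nonneg_zero[of "2 * L x" "qf S Q a b x"] nn[where x=x] True by simp
    have eqS: "qf (insert k S) Q a b x = qf S Q a b x" for x using exp L0 True by simp
    have nnS: "0 \<le> qf S Q a b x" for x using insert.prems(2)[of x] eqS[of x] by simp
    obtain K :: nat and l c where IH: "\<And>x. qf S Q a b x = (\<Sum>m<K. ((\<Sum>i\<in>S. l m i * x i) + c m)\<^sup>2)"
      using insert.IH[OF sym nnS] by blast
    have "(\<Sum>i\<in>insert k S. ((l m)(k := 0)) i * x i) = (\<Sum>i\<in>S. l m i * x i)" for m x
      using insert.hyps by (simp add: sum.insert) (intro sum.cong refl, auto)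
    then show ?thesis using IH eqS by (intro exI[of _ K] exI[of _ "\<lambda>m. (l m)(k := 0)"] exI[of _ c]) simp
  next
    case False
    define \<alpha> where "\<alpha> = Q k k"
    have ap: "0 < \<alpha>" using a0 False unfolding \<alpha>_def by simp
    define Q' where "Q' i j = Q i j - Q k i * Q k j / \<alpha>" for i j
    define a' where "a' j = a j - Q k j * a k / \<alpha>" for j
    define b' where "b' = b - (a k)\<^sup>2 / \<alpha>"
    have red: "qf S Q' a' b' x = qf S Q a b x - (L x)\<^sup>2 / \<alpha>" for x
    proof -
      have sq: "(\<Sum>j\<in>S. Q k j * x j)\<^sup>2 = (\<Sum>i\<in>S. \<Sum>j\<in>S. Q k i * Q k j * x i * x j)"
        by (simp add: power2_eq_square sum_product mult.commute mult.left_commute)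
      have "(L x)\<^sup>2 = (\<Sum>i\<in>S. \<Sum>j\<in>S. Q k i * Q k j * x i * x j) + 2 * a k * (\<Sum>j\<in>S. Q k j * x j) + (a k)\<^sup>2"
        unfolding L_def sq[symmetric] by (simp add: power2_eq_square algebra_simps)
      moreover have "(\<Sum>i\<in>S. \<Sum>j\<in>S. Q' i j * x i * x j) = (\<Sum>i\<in>S. \<Sum>j\<in>S. Q i j * x i * x j) - (\<Sum>i\<in>S. \<Sum>j\<in>S. Q k i * Q k j * x i * x j) / \<alpha>"
        unfolding Q'_def by (simp add: sum_subtractf sum_divide_distrib left_diff_distrib)
      moreover have "(\<Sum>i\<in>S. a' i * x i) = (\<Sum>i\<in>S. a i * x i) - (a k / \<alpha>) * (\<Sum>j\<in>S. Q k j * x j)"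
      proof -
        have "(\<Sum>i\<in>S. a' i * x i) = (\<Sum>i\<in>S. a i * x i - (a k / \<alpha>) * (Q k i * x i))"
          by (rule sum.cong) (use ap in \<open>auto simp: a'_def field_simps\<close>)
        also have "\<dots> = (\<Sum>i\<in>S. a i * x i) - (a k / \<alpha>) * (\<Sum>j\<in>S. Q k j * x j)"
          by (simp add: sum_subtractf sum_distrib_left)
        finally show ?thesis .
      qed
      ultimately show ?thesis unfolding qf_def b'_def using ap by (simp add: field_simps)
    qed
    have exp2: "qf (insert k S) Q a b x = \<alpha> * (x k + L x / \<alpha>)\<^sup>2 + qf S Q' a' b' x" for x
      unfolding exp red using ap by (simp add: \<alpha>_def[symmetric] power2_eq_square field_simps)
    have symQ': "Q' i j = Q' j i" for i j unfolding Q'_def using sym by (simp add: mult.commute)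
    have nn': "0 \<le> qf S Q' a' b' x" for x
    proof -
      have "0 \<le> qf (insert k S) Q a b (x(k := - L x / \<alpha>))" by (rule insert.prems(2))
      also have "\<dots> = qf S Q' a' b' x"
        unfolding exp2 Lupd using qf_upd[OF insert.hyps(2), of Q' a' b' x] by simp
      finally show ?thesis .
    qed
    obtain K :: nat and l c where IH: "\<And>x. qf S Q' a' b' x = (\<Sum>m<K. ((\<Sum>i\<in>S. l m i * x i) + c m)\<^sup>2)"
      using insert.IH[OF symQ' nn'] by blast
    define l0 where "l0 i = (if i = k then sqrt \<alpha> else Q k i / sqrt \<alpha>)" for i
    define c0 where "c0 = a k / sqrt \<alpha>"
    define l' where "l' m = (if m < K then (l m)(k := 0) else l0)" for m
    define c' where "c' m = (if m < K then c m else c0)" for m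
    have sa: "sqrt \<alpha> * sqrt \<alpha> = \<alpha>" using ap by simp
    have sap: "0 < sqrt \<alpha>" using ap by simp
    have t0: "((\<Sum>i\<in>insert k S. l0 i * x i) + c0)\<^sup>2 = \<alpha> * (x k + L x / \<alpha>)\<^sup>2" for x
    proof -
      have "(\<Sum>i\<in>insert k S. l0 i * x i) = sqrt \<alpha> * x k + (\<Sum>i\<in>S. Q k i * x i) / sqrt \<alpha>"
        using insert.hyps by (simp add: sum.insert l0_def sum_divide_distrib) (intro sum.cong refl, auto)
      then have s1: "(\<Sum>i\<in>insert k S. l0 i * x i) + c0 = sqrt \<alpha> * x k + L x / sqrt \<alpha>"
        unfolding c0_def L_def by (simp add: add_divide_distrib)
      have "sqrt \<alpha> * (L x / \<alpha>) = sqrt \<alpha> * L x / (sqrt \<alpha> * sqrt \<alpha>)" using sa by simp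
      also have "\<dots> = L x / sqrt \<alpha>" by (rule mult_divide_mult_cancel_left) (use sap in simp)
      finally have s2: "sqrt \<alpha> * (L x / \<alpha>) = L x / sqrt \<alpha>" .
      have "(\<Sum>i\<in>insert k S. l0 i * x i) + c0 = sqrt \<alpha> * (x k + L x / \<alpha>)"
        unfolding s1 distrib_left s2 ..
      then show ?thesis using ap by (simp add: power_mult_distrib)
    qed
    have tl: "(\<Sum>i\<in>insert k S. l' m i * x i) = (\<Sum>i\<in>S. l m i * x i)" if "m < K" for m x
      using insert.hyps that by (simp add: sum.insert l'_def) (intro sum.cong refl, auto)
    show ?thesis
    proof (intro exI[of _ "Suc K"] exI[of _ l'] exI[of _ c'] allI)
      fix x
      have "(\<Sum>m<Suc K. ((\<Sum>i\<in>insert k S. l' m i * x i) + c' m)\<^sup>2)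
          = (\<Sum>m<K. ((\<Sum>i\<in>insert k S. l' m i * x i) + c' m)\<^sup>2) + ((\<Sum>i\<in>insert k S. l0 i * x i) + c0)\<^sup>2"
        by (simp add: l'_def c'_def)
      also have "(\<Sum>m<K. ((\<Sum>i\<in>insert k S. l' m i * x i) + c' m)\<^sup>2) = (\<Sum>m<K. ((\<Sum>i\<in>S. l m i * x i) + c m)\<^sup>2)"
        by (intro sum.cong refl) (simp add: tl c'_def)
      finally show "qf (insert k S) Q a b x = (\<Sum>m<Suc K. ((\<Sum>i\<in>insert k S. l' m i * x i) + c' m)\<^sup>2)"
        using exp2 IH t0 by simp
    qed
  qed
qed

lemma ln_sum_concave:
  fixes w y :: "'k \<Rightarrow> real"
  assumes J: "finite J" "J \<noteq> {}" and w: "\<And>k. k \<in> J \<Longrightarrow> 0 \<le> w k" "sum w J = 1"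
    and y: "\<And>k. k \<in> J \<Longrightarrow> 0 < y k"
  shows "(\<Sum>k\<in>J. w k * ln (y k)) \<le> ln (\<Sum>k\<in>J. w k * y k)"
proof -
  have cv: "convex_on {0<..} (\<lambda>x. - ln x)" using ln_concave unfolding concave_on_def .
  have "- ln (\<Sum>k\<in>J. w k *\<^sub>R y k) \<le> (\<Sum>k\<in>J. w k * (- ln (y k)))"
    by (rule convex_on_sum[OF J cv w(2) w(1)]) (use y in auto)
  then show ?thesis by (simp add: sum_negf)
qed

lemma (in prob_space) combine:
  fixes T :: "'k \<Rightarrow> 'a \<Rightarrow> real" and C :: real
  assumes J: "finite J" "J \<noteq> {}" and C: "0 \<le> C"
    and iT: "\<And>k. k \<in> J \<Longrightarrow> integrable M (T k)"
    and iL: "\<And>k. k \<in> J \<Longrightarrow> integrable M (\<lambda>\<omega>. ln (T k \<omega>))"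
    and pos: "\<And>k. k \<in> J \<Longrightarrow> AE \<omega> in M. 0 < T k \<omega>"
    and epos: "\<And>k. k \<in> J \<Longrightarrow> 0 < expectation (T k)"
    and gap: "\<And>k. k \<in> J \<Longrightarrow> ln (expectation (T k)) - C \<le> expectation (\<lambda>\<omega>. ln (T k \<omega>))"
  shows "integrable M (\<lambda>\<omega>. \<Sum>k\<in>J. T k \<omega>)"
    and "integrable M (\<lambda>\<omega>. ln (\<Sum>k\<in>J. T k \<omega>))"
    and "expectation (\<lambda>\<omega>. ln (\<Sum>k\<in>J. T k \<omega>)) \<le> ln (expectation (\<lambda>\<omega>. \<Sum>k\<in>J. T k \<omega>))"
    and "ln (expectation (\<lambda>\<omega>. \<Sum>k\<in>J. T k \<omega>)) \<le> expectation (\<lambda>\<omega>. ln (\<Sum>k\<in>J. T k \<omega>)) + C"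
proof -
  define e where "e k = expectation (T k)" for k
  define P where "P \<omega> = (\<Sum>k\<in>J. T k \<omega>)" for \<omega>
  have iP: "integrable M P" unfolding P_def using iT by (intro Bochner_Integration.integrable_sum) auto
  then show "integrable M (\<lambda>\<omega>. \<Sum>k\<in>J. T k \<omega>)" unfolding P_def .
  define E where "E = expectation P"
  have E: "E = (\<Sum>k\<in>J. e k)" unfolding E_def P_def e_def
    using iT by (intro Bochner_Integration.integral_sum) auto
  have Epos: "0 < E" unfolding E using J epos e_def by (intro sum_pos) auto
  define w where "w k = e k / E" for k
  have w0: "\<And>k. k \<in> J \<Longrightarrow> 0 \<le> w k" unfolding w_def e_def using epos Epos by (simp add: less_imp_le)
  have w1: "sum w J = 1" unfolding w_def using Epos by (simp add: sum_divide_distrib[symmetric] E)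
  have AEpos: "AE \<omega> in M. \<forall>k\<in>J. 0 < T k \<omega>" by (rule AE_finite_allI[OF J(1) pos])
  define lb where "lb \<omega> = ln E + (\<Sum>k\<in>J. w k * (ln (T k \<omega>) - ln (e k)))" for \<omega>
  define ub where "ub \<omega> = ln E + (P \<omega> - E) / E" for \<omega>
  have ilb: "integrable M lb" unfolding lb_def
    using iL by (intro Bochner_Integration.integrable_add Bochner_Integration.integrable_sum
        Bochner_Integration.integrable_mult_right Bochner_Integration.integrable_diff) auto
  have iub: "integrable M ub" unfolding ub_def
    using iP by (intro Bochner_Integration.integrable_add Bochner_Integration.integrable_divide_zero
        Bochner_Integration.integrable_diff) auto
  have bounds: "AE \<omega> in M. lb \<omega> \<le> ln (P \<omega>) \<and> ln (P \<omega>) \<le> ub \<omega>"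
    using AEpos
  proof eventually_elim
    case (elim \<omega>)
    have Ppos: "0 < P \<omega>" unfolding P_def using elim J by (intro sum_pos) auto
    have "ln (P \<omega> / E) \<le> P \<omega> / E - 1" using Ppos Epos by (intro ln_le_minus_one) simp
    then have u: "ln (P \<omega>) \<le> ub \<omega>" unfolding ub_def using Ppos Epos by (simp add: ln_div diff_divide_distrib)
    define y where "y k = T k \<omega> * E / e k" for k
    have ypos: "\<And>k. k \<in> J \<Longrightarrow> 0 < y k" unfolding y_def e_def using elim epos Epos by simp
    have "(\<Sum>k\<in>J. w k * ln (y k)) \<le> ln (\<Sum>k\<in>J. w k * y k)"
      by (rule ln_sum_concave[OF J w0 w1 ypos])
    also have "(\<Sum>k\<in>J. w k * y k) = P \<omega>" unfolding P_def
    proof (intro sum.cong refl)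
      fix k assume k: "k \<in> J"
      have "e k \<noteq> 0" using epos[OF k] unfolding e_def by simp
      then show "w k * y k = T k \<omega>" unfolding w_def y_def using Epos by (simp add: field_simps)
    qed
    also have "(\<Sum>k\<in>J. w k * ln (y k)) = (\<Sum>k\<in>J. w k * (ln (T k \<omega>) - ln (e k)) + w k * ln E)"
    proof (intro sum.cong refl)
      fix k assume k: "k \<in> J"
      have Tp: "0 < T k \<omega>" using elim k by auto
      have ep: "0 < e k" using epos[OF k] unfolding e_def .
      have "ln (y k) = ln (T k \<omega> * E) - ln (e k)"
        unfolding y_def using Tp ep Epos by (simp add: ln_div)
      also have "ln (T k \<omega> * E) = ln (T k \<omega>) + ln E" using Tp Epos by (simp add: ln_mult)
      finally have "ln (y k) = ln (T k \<omega>) + ln E - ln (e k)" .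
      then show "w k * ln (y k) = w k * (ln (T k \<omega>) - ln (e k)) + w k * ln E" by (simp add: right_diff_distrib distrib_left)
    qed
    also have "\<dots> = (\<Sum>k\<in>J. w k * (ln (T k \<omega>) - ln (e k))) + ln E"
      by (simp add: sum.distrib sum_distrib_right[symmetric] w1)
    finally have l: "lb \<omega> \<le> ln (P \<omega>)" unfolding lb_def by simp
    show ?case using l u by simp
  qed
  have mP: "(\<lambda>\<omega>. ln (P \<omega>)) \<in> borel_measurable M"
    using iP by (intro borel_measurable_ln borel_measurable_integrable) 
  have iLP: "integrable M (\<lambda>\<omega>. ln (P \<omega>))"
  proof (rule Bochner_Integration.integrable_bound)
    show "integrable M (\<lambda>\<omega>. \<bar>lb \<omega>\<bar> + \<bar>ub \<omega>\<bar>)" using ilb iub by auto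
    show "(\<lambda>\<omega>. ln (P \<omega>)) \<in> borel_measurable M" by (rule mP)
    show "AE \<omega> in M. norm (ln (P \<omega>)) \<le> norm (\<bar>lb \<omega>\<bar> + \<bar>ub \<omega>\<bar>)"
      using bounds by eventually_elim auto
  qed
  then show "integrable M (\<lambda>\<omega>. ln (\<Sum>k\<in>J. T k \<omega>))" unfolding P_def .
  have "expectation (\<lambda>\<omega>. ln (P \<omega>)) \<le> expectation ub"
    by (rule integral_mono_AE[OF iLP iub]) (use bounds in eventually_elim, auto)
  also have "expectation ub = ln E"
    unfolding ub_def using iP
    by (simp add: Bochner_Integration.integral_add Bochner_Integration.integral_diff Bochner_Integration.integral_divide_zero E_def prob_space)
  finally show "expectation (\<lambda>\<omega>. ln (\<Sum>k\<in>J. T k \<omega>)) \<le> ln (expectation (\<lambda>\<omega>. \<Sum>k\<in>J. T k \<omega>))"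
    unfolding P_def E_def by simp
  have "expectation lb \<le> expectation (\<lambda>\<omega>. ln (P \<omega>))"
    by (rule integral_mono_AE[OF ilb iLP]) (use bounds in eventually_elim, auto)
  moreover have "expectation lb = ln E + (\<Sum>k\<in>J. w k * (expectation (\<lambda>\<omega>. ln (T k \<omega>)) - ln (e k)))"
    unfolding lb_def using iL
    by (simp add: Bochner_Integration.integral_add Bochner_Integration.integral_sum
        Bochner_Integration.integral_diff prob_space
        Bochner_Integration.integrable_sum Bochner_Integration.integrable_diff)
  moreover have "(\<Sum>k\<in>J. w k * (- C)) \<le> (\<Sum>k\<in>J. w k * (expectation (\<lambda>\<omega>. ln (T k \<omega>)) - ln (e k)))"
  proof (intro sum_mono mult_left_mono)
    fix k assume k: "k \<in> J"
    show "- C \<le> expectation (\<lambda>\<omega>. ln (T k \<omega>)) - ln (e k)" using gap[OF k] unfolding e_def by linarith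
    show "0 \<le> w k" using w0[OF k] .
  qed
  moreover have "(\<Sum>k\<in>J. w k * (- C)) = - C" using w1 by (simp add: sum_negf sum_distrib_right[symmetric])
  ultimately show "ln (expectation (\<lambda>\<omega>. \<Sum>k\<in>J. T k \<omega>)) \<le> expectation (\<lambda>\<omega>. ln (\<Sum>k\<in>J. T k \<omega>)) + C"
    unfolding P_def E_def by simp
qed

lemma quad_poly_qf:
  fixes Q :: "real^'n^'n" and a x :: "real^'n"
  shows "quad_poly Q a b x = qf UNIV (\<lambda>i j. Q$i$j) (\<lambda>i. a$i) b (\<lambda>i. x$i)"
proof -
  have "x \<bullet> (Q *v x) = (\<Sum>i\<in>UNIV. \<Sum>j\<in>UNIV. Q$i$j * x$i * x$j)"
    by (simp add: inner_vec_def matrix_vector_mult_def sum_distrib_left mult.commute mult.left_commute)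
  moreover have "a \<bullet> x = (\<Sum>i\<in>UNIV. a$i * x$i)" by (simp add: inner_vec_def)
  ultimately show ?thesis unfolding quad_poly_def qf_def by simp
qed

lemma quad_decomp:
  fixes Q :: "real^'n^'n" and a :: "real^'n"
  assumes sym: "transpose Q = Q" and nn: "\<And>x. 0 \<le> quad_poly Q a b x"
  shows "\<exists>(K::nat) l c. \<forall>x. quad_poly Q a b x = (\<Sum>m<K. ((\<Sum>i\<in>UNIV. l m i * x$i) + c m)\<^sup>2)"
proof -
  have s: "Q$i$j = Q$j$i" for i j
    using arg_cong[OF sym, of "\<lambda>A. A$j$i"] by (simp add: transpose_def)
  have nn': "0 \<le> qf UNIV (\<lambda>i j. Q$i$j) (\<lambda>i. a$i) b x" for x :: "'n \<Rightarrow> real"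
  proof -
    have ex: "(\<lambda>i. (\<chi> i. x i)$i) = x" by (rule ext) simp
    show ?thesis using nn[of "\<chi> i. x i"] unfolding quad_poly_qf ex .
  qed
  obtain K :: nat and l c where H: "\<And>x. qf UNIV (\<lambda>i j. Q$i$j) (\<lambda>i. a$i) b x = (\<Sum>m<K. ((\<Sum>i\<in>UNIV. l m i * x i) + c m)\<^sup>2)"
    using qf_decomp[of UNIV "\<lambda>i j. Q$i$j" "\<lambda>i. a$i" b] s nn' by auto
  show ?thesis
    by (rule exI[of _ K], rule exI[of _ l], rule exI[of _ c]) (simp add: quad_poly_qf H)
qed

lemma C1_nonneg: "0 \<le> C1"
proof -
  let ?g = "std_normal_density"
  have i0: "integrable lborel (\<lambda>z. ?g z * ln (z\<^sup>2))" using integrable_ln_shift[of 0] by simp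
  have i1: "integrable lborel (\<lambda>z. ?g z * (z\<^sup>2 - 1))"
    using integrable_std_normal_moment[of 2] by (simp add: right_diff_distrib)
  have "(\<integral>z. ?g z * ln (z\<^sup>2) \<partial>lborel) \<le> (\<integral>z. ?g z * (z\<^sup>2 - 1) \<partial>lborel)"
  proof (rule integral_mono_AE[OF i0 i1])
    show "AE z in lborel. ?g z * ln (z\<^sup>2) \<le> ?g z * (z\<^sup>2 - 1)"
      using AE_lborel_singleton[of 0]
    proof eventually_elim
      case (elim z)
      then have "ln (z\<^sup>2) \<le> z\<^sup>2 - 1" by (intro ln_le_minus_one) simp
      then show ?case by (intro mult_left_mono) simp_all
    qed
  qed
  also have "\<dots> = 0"
  proof -
    have "(\<integral>z. ?g z * (z\<^sup>2 - 1) \<partial>lborel) = (\<integral>z. ?g z * z^(2*1) - ?g z \<partial>lborel)"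
      by (simp add: right_diff_distrib)
    also have "\<dots> = (\<integral>z. ?g z * z^(2*1) \<partial>lborel) - (\<integral>z. ?g z \<partial>lborel)"
      by (rule Bochner_Integration.integral_diff) (auto intro: integrable_std_normal_moment)
    also have "\<dots> = 0" using integral_std_normal_moment_even[of 1] by simp
    finally show ?thesis .
  qed
  finally show ?thesis unfolding C1_eq by simp
qed

theorem lemma5p2:
  fixes M :: "'s measure"
    and Q :: "real^'n^'n" and a :: "real^'n" and b :: real
    and X :: "'n \<Rightarrow> 's \<Rightarrow> real"
    and \<mu> \<sigma> :: "'n \<Rightarrow> real"
  assumes "prob_space M"
    and symQ: "transpose Q = Q"
    and nonneg: "\<And>x. quad_poly Q a b x \<ge> 0"
    and nonzero: "\<exists>x. quad_poly Q a b x \<noteq> 0"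
    and indep: "prob_space.indep_vars M (\<lambda>_. borel) X UNIV"
    and sigma_pos: "\<And>i. \<sigma> i > 0"
    and gauss: "\<And>i. distributed M lborel (X i) (normal_density (\<mu> i) (\<sigma> i))"
  shows "integrable M (\<lambda>\<omega>. quad_poly Q a b (\<chi> i. X i \<omega>))
    \<and> integrable M (\<lambda>\<omega>. ln (quad_poly Q a b (\<chi> i. X i \<omega>)))
    \<and> prob_space.expectation M (\<lambda>\<omega>. ln (quad_poly Q a b (\<chi> i. X i \<omega>)))
        \<le> ln (prob_space.expectation M (\<lambda>\<omega>. quad_poly Q a b (\<chi> i. X i \<omega>)))
    \<and> ln (prob_space.expectation M (\<lambda>\<omega>. quad_poly Q a b (\<chi> i. X i \<omega>)))
        \<le> prob_space.expectation M (\<lambda>\<omega>. ln (quad_poly Q a b (\<chi> i. X i \<omega>))) + C1"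
proof -
  interpret P: prob_space M by fact
  obtain K :: nat and l c where dec: "\<And>x. quad_poly Q a b x = (\<Sum>m<K. ((\<Sum>i\<in>UNIV. l m i * x$i) + c m)\<^sup>2)"
    using quad_decomp[OF symQ nonneg] by blast
  define U where "U m \<omega> = (\<Sum>i\<in>UNIV. l m i * X i \<omega>) + c m" for m \<omega>
  define J where "J = {m. m < K \<and> ((\<exists>i. l m i \<noteq> 0) \<or> c m \<noteq> 0)}"
  have finJ: "finite J" unfolding J_def by simp
  have zero_out: "((\<Sum>i\<in>UNIV. l m i * x$i) + c m)\<^sup>2 = 0" if "m < K" "m \<notin> J" for m and x :: "real^'n"
    using that unfolding J_def by simp
  have decJ: "quad_poly Q a b x = (\<Sum>m\<in>J. ((\<Sum>i\<in>UNIV. l m i * x$i) + c m)\<^sup>2)" for x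
    unfolding dec by (rule sum.mono_neutral_right) (use zero_out in \<open>auto simp: J_def\<close>)
  have Jne: "J \<noteq> {}"
  proof
    assume "J = {}"
    then have "quad_poly Q a b x = 0" for x unfolding decJ by simp
    then show False using nonzero by blast
  qed
  have Pform: "quad_poly Q a b (\<chi> i. X i \<omega>) = (\<Sum>m\<in>J. (U m \<omega>)\<^sup>2)" for \<omega>
    unfolding decJ U_def by simp
  have Xmeas[measurable]: "X i \<in> borel_measurable M" for i
    using distributed_measurable[OF gauss[of i]] by simp
  have term_props: "integrable M (\<lambda>\<omega>. (U m \<omega>)\<^sup>2) \<and> integrable M (\<lambda>\<omega>. ln ((U m \<omega>)\<^sup>2))
      \<and> (AE \<omega> in M. 0 < (U m \<omega>)\<^sup>2) \<and> 0 < P.expectation (\<lambda>\<omega>. (U m \<omega>)\<^sup>2)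
      \<and> ln (P.expectation (\<lambda>\<omega>. (U m \<omega>)\<^sup>2)) - C1 \<le> P.expectation (\<lambda>\<omega>. ln ((U m \<omega>)\<^sup>2))"
    if m: "m \<in> J" for m
  proof (cases "\<exists>i. l m i \<noteq> 0")
    case True
    define I where "I = {i. l m i \<noteq> 0}"
    have finI: "finite I" and neI: "I \<noteq> {}" using True unfolding I_def by auto
    define Y where "Y i \<omega> = l m i * X i \<omega>" for i \<omega>
    have DY: "distributed M lborel (Y i) (normal_density (l m i * \<mu> i) (\<bar>l m i\<bar> * \<sigma> i))" if "i \<in> I" for i
    proof -
      have "distributed M lborel (\<lambda>x. 0 + l m i * X i x) (normal_density (0 + l m i * \<mu> i) (\<bar>l m i\<bar> * \<sigma> i))"
        by (rule P.normal_density_affine[OF gauss sigma_pos]) (use that in \<open>simp add: I_def\<close>)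
      then show ?thesis unfolding Y_def by simp
    qed
    have indY: "P.indep_vars (\<lambda>_. borel) Y I"
    proof -
      have "P.indep_vars (\<lambda>_. borel) (\<lambda>i x. (\<lambda>v. l m i * v) (X i x)) I"
        by (rule P.indep_vars_compose2[OF P.indep_vars_subset[OF indep]]) auto
      then show ?thesis unfolding Y_def by simp
    qed
    have spos: "0 < \<bar>l m i\<bar> * \<sigma> i" if "i \<in> I" for i
      using that sigma_pos[of i] unfolding I_def by simp
    have DS: "distributed M lborel (\<lambda>x. \<Sum>i\<in>I. Y i x)
        (normal_density (\<Sum>i\<in>I. l m i * \<mu> i) (sqrt (\<Sum>i\<in>I. (\<bar>l m i\<bar> * \<sigma> i)\<^sup>2)))"
      by (rule P.sum_indep_normal[OF finI neI indY spos DY])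
    have sp: "0 < sqrt (\<Sum>i\<in>I. (\<bar>l m i\<bar> * \<sigma> i)\<^sup>2)"
    proof -
      have "0 < (\<Sum>i\<in>I. (\<bar>l m i\<bar> * \<sigma> i)\<^sup>2)"
      proof (rule sum_pos[OF finI neI])
        fix i assume "i \<in> I"
        then have "0 < \<bar>l m i\<bar> * \<sigma> i" by (rule spos)
        then show "0 < (\<bar>l m i\<bar> * \<sigma> i)\<^sup>2" by (rule zero_less_power)
      qed
      then show ?thesis by simp
    qed
    have DU': "distributed M lborel (\<lambda>x. c m + 1 * (\<Sum>i\<in>I. Y i x))
        (normal_density (c m + 1 * (\<Sum>i\<in>I. l m i * \<mu> i)) (\<bar>1\<bar> * sqrt (\<Sum>i\<in>I. (\<bar>l m i\<bar> * \<sigma> i)\<^sup>2)))"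
      by (rule P.normal_density_affine[OF DS sp]) simp
    have Ueq: "U m = (\<lambda>x. c m + 1 * (\<Sum>i\<in>I. Y i x))"
    proof
      fix x
      have "(\<Sum>i\<in>UNIV. l m i * X i x) = (\<Sum>i\<in>I. l m i * X i x)"
        by (rule sum.mono_neutral_right) (auto simp: I_def)
      then show "U m x = c m + 1 * (\<Sum>i\<in>I. Y i x)" unfolding U_def Y_def by simp
    qed
    define mm where "mm = c m + 1 * (\<Sum>i\<in>I. l m i * \<mu> i)"
    define ss where "ss = \<bar>1\<bar> * sqrt (\<Sum>i\<in>I. (\<bar>l m i\<bar> * \<sigma> i)\<^sup>2)"
    have ss: "0 < ss" unfolding ss_def using sp by simp
    have DU: "distributed M lborel (U m) (normal_density mm ss)"
      unfolding Ueq mm_def ss_def by (rule DU')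
    note nt = P.normal_term[OF ss DU]
    have "0 < mm\<^sup>2 + ss\<^sup>2" using ss by (simp add: add_nonneg_pos)
    moreover have "AE \<omega> in M. 0 < (U m \<omega>)\<^sup>2" using nt(5) by eventually_elim simp
    ultimately show ?thesis using nt(1-4) by simp
  next
    case False
    then have cm: "c m \<noteq> 0" using m unfolding J_def by auto
    have Uc: "U m = (\<lambda>\<omega>. c m)" using False unfolding U_def by (auto simp: fun_eq_iff)
    have "0 < (c m)\<^sup>2" using cm by simp
    then show ?thesis unfolding Uc using C1_nonneg by (simp add: P.prob_space)
  qed
  have t1: "\<And>m. m \<in> J \<Longrightarrow> integrable M (\<lambda>\<omega>. (U m \<omega>)\<^sup>2)" using term_props by blast
  have t2: "\<And>m. m \<in> J \<Longrightarrow> integrable M (\<lambda>\<omega>. ln ((U m \<omega>)\<^sup>2))" using term_props by blast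
  have t3: "\<And>m. m \<in> J \<Longrightarrow> AE \<omega> in M. 0 < (U m \<omega>)\<^sup>2" using term_props by blast
  have t4: "\<And>m. m \<in> J \<Longrightarrow> 0 < P.expectation (\<lambda>\<omega>. (U m \<omega>)\<^sup>2)" using term_props by blast
  have t5: "\<And>m. m \<in> J \<Longrightarrow> ln (P.expectation (\<lambda>\<omega>. (U m \<omega>)\<^sup>2)) - C1 \<le> P.expectation (\<lambda>\<omega>. ln ((U m \<omega>)\<^sup>2))"
    using term_props by blast
  note cmb = P.combine[where T="\<lambda>m \<omega>. (U m \<omega>)\<^sup>2" and J=J and C=C1]
  have r1: "integrable M (\<lambda>\<omega>. \<Sum>m\<in>J. (U m \<omega>)\<^sup>2)"
    by (rule cmb(1)[OF finJ Jne C1_nonneg t1 t2 t3 t4 t5])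
  have r2: "integrable M (\<lambda>\<omega>. ln (\<Sum>m\<in>J. (U m \<omega>)\<^sup>2))"
    by (rule cmb(2)[OF finJ Jne C1_nonneg t1 t2 t3 t4 t5])
  have r3: "P.expectation (\<lambda>\<omega>. ln (\<Sum>m\<in>J. (U m \<omega>)\<^sup>2)) \<le> ln (P.expectation (\<lambda>\<omega>. \<Sum>m\<in>J. (U m \<omega>)\<^sup>2))"
    by (rule cmb(3)[OF finJ Jne C1_nonneg t1 t2 t3 t4 t5])
  have r4: "ln (P.expectation (\<lambda>\<omega>. \<Sum>m\<in>J. (U m \<omega>)\<^sup>2)) \<le> P.expectation (\<lambda>\<omega>. ln (\<Sum>m\<in>J. (U m \<omega>)\<^sup>2)) + C1"
    by (rule cmb(4)[OF finJ Jne C1_nonneg t1 t2 t3 t4 t5])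
  show ?thesis unfolding Pform using r1 r2 r3 r4 by (intro conjI)
qed

end
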